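(* Let $M\ge1$ and $m_0\ge1$ be integers. For each $i\in\{1,\dots,M\}$ let $A_i\in\mathbb{R}^{n_i\times n_i}$, $B_i,F_i\in\mathbb{R}^{n_i\times m_0}$, $C_i\in\mathbb{R}^{m_0\times n_i}$, let $\mathcal{N}_i^-\subseteq\{1,\dots,M\}\setminus\{i\}$ and $l_{ij}\in\mathbb{R}$ for $j\in\mathcal{N}_i^-$, and consider the interconnected discrete-time system $$x_i^+=A_ix_i+B_iu_i+F_iv_i,\quad y_i=C_ix_i,\quad v_i=\sum_{j\in\mathcal{N}_i^-}l_{ij}(y_j-y_i),\qquad i=1,\dots,M.$$ Let $n=\sum_in_i$, $m=Mm_0$, $C=\operatorname{diag}(C_1,\dots,C_M)$, and let $\tilde L\in\mathbb{R}^{m\times m}$ be the block matrix with $m_0\times m_0$ blocks $\tilde L_{ii}=\big(\sum_{j\in\mathcal{N}_i^-}l_{ij}\big)I_{m_0}$, $\tilde L_{ij}=-l_{ij}I_{m_0}$ for $j\in\mathcal{N}_i^-$, and $\tilde L_{ij}=0$ otherwise; assume $w^\top\tilde Lw\ge0$ for all $w\in\mathbb{R}^m$. Let $U=\tilde LC\in\mathbb{R}^{m\times n}$ and $W=C^\top\tilde L^\top\in\mathbb{R}^{n\times m}$, and partition them into block rows $U=[U_1^\top,\dots,U_M^\top]^\top$ with $U_i\in\mathbb{R}^{m_0\times n}$ and $W=[W_1^\top,\dots,W_M^\top]^\top$ with $W_i\in\mathbb{R}^{n_i\times m}$. Fix $\epsilon_0>0$ and $\epsilon_i>0$ for $i=1,\dots,M$.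 Suppose that for every $i\in\{1,\dots,M\}$ there exist $S_i\in\mathbb{R}^{m_0\times m_0}$, $G_i\in\mathbb{R}^{m_0\times n_i}$, symmetric $E_i\in\mathbb{R}^{n_i\times n_i}$ and $H_i\in\mathbb{R}^{n_i\times n_i}$ satisfying: (i) $E_i\succeq\epsilon_iI_{n_i}$; (ii) $H_i$ and $S_i$ are diagonal with strictly positive diagonal entries; (iii) $$\begin{bmatrix} E_i & \tfrac12 E_iC_i^\top & (A_iE_i+B_iG_i)^\top & E_i\\ \tfrac12 C_iE_i & \tfrac12 S_i+\tfrac12 S_i^\top & F_i^\top & 0\\ A_iE_i+B_iG_i & F_i & E_i & 0\\ E_i & 0 & 0 & H_i \end{bmatrix}\succeq 0;$$ (iv) $[H_i]_j\le\dfrac{1}{|W_i|_j+\epsilon_0}$ for all $j\in\{1,\dots,n_i\}$; (v) $[S_i]_k\le\dfrac{1}{|U_i|_k}$ for all $k\in\{1,\dots,m_0\}$ with $|U_i|_k>0$. Then the decentralized control laws $u_i=K_ix_i$ with $K_i=G_iE_i^{-1}$, $i=1,\dots,M$, render the origin of the global closed-loop system asymptotically stable.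
   Context: For a matrix $T$, $[T]_j$ denotes its $j$-th diagonal entry and $|T|_j$ the $1$-norm (sum of absolute values of entries) of its $j$-th row. $I_k$ is the $k\times k$ identity matrix and $M\succeq0$ means the symmetric matrix $M$ is positive semidefinite. The global closed-loop system is $x_i^+=(A_i+B_iK_i)x_i+F_iv_i$, $i=1,\dots,M$, with $v_i$ given by the coupling formula. *)

theory Defs
  imports "Jordan_Normal_Form.Matrix"
begin

(* Subsystems are indexed by i < M (0-based), and matrix entries are 0-based. *)

definition psd_mat :: "real mat \<Rightarrow> bool" where
  "psd_mat P \<longleftrightarrow> P \<in> carrier_mat (dim_row P) (dim_row P) \<and> transpose_mat P = P \<and>
     (\<forall>x \<in> carrier_vec (dim_row P). 0 \<le> x \<bullet> (P *\<^sub>v x))"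

definition mat_inv :: "real mat \<Rightarrow> real mat" where
  "mat_inv E = (SOME B. B \<in> carrier_mat (dim_row E) (dim_row E) \<and>
                    E * B = 1\<^sub>m (dim_row E) \<and> B * E = 1\<^sub>m (dim_row E))"

definition row_norm1 :: "real mat \<Rightarrow> nat \<Rightarrow> real" where
  "row_norm1 T j = (\<Sum>c<dim_col T. \<bar>T $$ (j, c)\<bar>)"

(* offset of subsystem i in the stacked state *)
definition offs :: "(nat \<Rightarrow> nat) \<Rightarrow> nat \<Rightarrow> nat" where
  "offs nn i = (\<Sum>j<i. nn j)"

(* C = diag(C_0,...,C_{M-1}), an (M*m0) x (sum nn) matrix *)
definition Cglob :: "nat \<Rightarrow> nat \<Rightarrow> (nat \<Rightarrow> nat) \<Rightarrow> (nat \<Rightarrow> real mat) \<Rightarrow> real mat" where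
  "Cglob M m0 nn C = mat (M * m0) (offs nn M) (\<lambda>(r, c).
      let i = r div m0; k = r mod m0 in
      if offs nn i \<le> c \<and> c < offs nn i + nn i then C i $$ (k, c - offs nn i) else 0)"

definition Ltil :: "nat \<Rightarrow> nat \<Rightarrow> (nat \<Rightarrow> nat set) \<Rightarrow> (nat \<Rightarrow> nat \<Rightarrow> real) \<Rightarrow> real mat" where
  "Ltil M m0 N l = mat (M * m0) (M * m0) (\<lambda>(r, c).
      let i = r div m0; j = c div m0 in
      if r mod m0 = c mod m0 then
        (if i = j then (\<Sum>j'\<in>N i. l i j') else if j \<in> N i then - l i j else 0)
      else 0)"

definition gnorm :: "nat \<Rightarrow> (nat \<Rightarrow> real vec) \<Rightarrow> real" where
  "gnorm M x = sqrt (\<Sum>i<M. \<Sum>k<dim_vec (x i). (x i $ k)\<^sup>2)"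

definition cl_traj ::
  "nat \<Rightarrow> (nat \<Rightarrow> nat) \<Rightarrow> (nat \<Rightarrow> real mat) \<Rightarrow> (nat \<Rightarrow> real mat) \<Rightarrow> (nat \<Rightarrow> real mat)
   \<Rightarrow> (nat \<Rightarrow> real mat) \<Rightarrow> (nat \<Rightarrow> real mat) \<Rightarrow> (nat \<Rightarrow> nat set) \<Rightarrow> (nat \<Rightarrow> nat \<Rightarrow> real)
   \<Rightarrow> (nat \<Rightarrow> nat \<Rightarrow> real vec) \<Rightarrow> bool" where
  "cl_traj M nn A B F C K N l x \<longleftrightarrow>
     (\<forall>t. \<forall>i<M. x t i \<in> carrier_vec (nn i)) \<and>
     (\<forall>t. \<forall>i<M. x (Suc t) i =
        (A i + B i * K i) *\<^sub>v x t i +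
        F i *\<^sub>v vec (dim_row (C i)) (\<lambda>k.
                 \<Sum>j\<in>N i. l i j * ((C j *\<^sub>v x t j) $ k - (C i *\<^sub>v x t i) $ k)))"

definition cl_asymp_stable ::
  "nat \<Rightarrow> (nat \<Rightarrow> nat) \<Rightarrow> (nat \<Rightarrow> real mat) \<Rightarrow> (nat \<Rightarrow> real mat) \<Rightarrow> (nat \<Rightarrow> real mat)
   \<Rightarrow> (nat \<Rightarrow> real mat) \<Rightarrow> (nat \<Rightarrow> real mat) \<Rightarrow> (nat \<Rightarrow> nat set) \<Rightarrow> (nat \<Rightarrow> nat \<Rightarrow> real) \<Rightarrow> bool" where
  "cl_asymp_stable M nn A B F C K N l \<longleftrightarrow>
     (\<forall>e>0. \<exists>d>0. \<forall>x. cl_traj M nn A B F C K N l x \<longrightarrow> gnorm M (x 0) < d \<longrightarrow>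
         (\<forall>t. gnorm M (x t) < e)) \<and>
     (\<exists>d>0. \<forall>x. cl_traj M nn A B F C K N l x \<longrightarrow> gnorm M (x 0) < d \<longrightarrow>
         (\<lambda>t. gnorm M (x t)) \<longlonglongrightarrow> 0)"

end

theory Submission
  imports Defs "Jordan_Normal_Form.Determinant"
begin




lemma qf4:
  fixes P11 P12 P13 P14 P21 P22 P23 P24 P31 P32 P33 P34 P41 P42 P43 P44 :: "real mat"
  assumes "P11 \<in> carrier_mat n1 n1" "P12 \<in> carrier_mat n1 n2" "P13 \<in> carrier_mat n1 n3" "P14 \<in> carrier_mat n1 n4"
    "P21 \<in> carrier_mat n2 n1" "P22 \<in> carrier_mat n2 n2" "P23 \<in> carrier_mat n2 n3" "P24 \<in> carrier_mat n2 n4"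
    "P31 \<in> carrier_mat n3 n1" "P32 \<in> carrier_mat n3 n2" "P33 \<in> carrier_mat n3 n3" "P34 \<in> carrier_mat n3 n4"
    "P41 \<in> carrier_mat n4 n1" "P42 \<in> carrier_mat n4 n2" "P43 \<in> carrier_mat n4 n3" "P44 \<in> carrier_mat n4 n4"
    and v: "a \<in> carrier_vec n1" "b \<in> carrier_vec n2" "c \<in> carrier_vec n3" "d \<in> carrier_vec n4"
  shows "((a @\<^sub>v b) @\<^sub>v (c @\<^sub>v d)) \<bullet> (four_block_mat (four_block_mat P11 P12 P21 P22) (four_block_mat P13 P14 P23 P24)
      (four_block_mat P31 P32 P41 P42) (four_block_mat P33 P34 P43 P44) *\<^sub>v ((a @\<^sub>v b) @\<^sub>v (c @\<^sub>v d)))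
   = a \<bullet> (P11 *\<^sub>v a) + a \<bullet> (P12 *\<^sub>v b) + a \<bullet> (P13 *\<^sub>v c) + a \<bullet> (P14 *\<^sub>v d)
   + b \<bullet> (P21 *\<^sub>v a) + b \<bullet> (P22 *\<^sub>v b) + b \<bullet> (P23 *\<^sub>v c) + b \<bullet> (P24 *\<^sub>v d)
   + c \<bullet> (P31 *\<^sub>v a) + c \<bullet> (P32 *\<^sub>v b) + c \<bullet> (P33 *\<^sub>v c) + c \<bullet> (P34 *\<^sub>v d)
   + d \<bullet> (P41 *\<^sub>v a) + d \<bullet> (P42 *\<^sub>v b) + d \<bullet> (P43 *\<^sub>v c) + d \<bullet> (P44 *\<^sub>v d)"
proof -
  have TL: "four_block_mat P11 P12 P21 P22 \<in> carrier_mat (n1+n2) (n1+n2)" using assms by auto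
  have TR: "four_block_mat P13 P14 P23 P24 \<in> carrier_mat (n1+n2) (n3+n4)" using assms by auto
  have BL: "four_block_mat P31 P32 P41 P42 \<in> carrier_mat (n3+n4) (n1+n2)" using assms by auto
  have BR: "four_block_mat P33 P34 P43 P44 \<in> carrier_mat (n3+n4) (n3+n4)" using assms by auto
  have ab: "a @\<^sub>v b \<in> carrier_vec (n1+n2)" and cd: "c @\<^sub>v d \<in> carrier_vec (n3+n4)" using v by auto
  note e1 = four_block_mat_mult_vec[OF TL TR BL BR ab cd]
  note e2 = four_block_mat_mult_vec[OF assms(1,2,5,6) v(1,2)]
  note e3 = four_block_mat_mult_vec[OF assms(3,4,7,8) v(3,4)]
  note e4 = four_block_mat_mult_vec[OF assms(9,10,13,14) v(1,2)]
  note e5 = four_block_mat_mult_vec[OF assms(11,12,15,16) v(3,4)]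
  have s1: "((P11 *\<^sub>v a + P12 *\<^sub>v b) @\<^sub>v (P21 *\<^sub>v a + P22 *\<^sub>v b)) + ((P13 *\<^sub>v c + P14 *\<^sub>v d) @\<^sub>v (P23 *\<^sub>v c + P24 *\<^sub>v d))
     = (P11 *\<^sub>v a + P12 *\<^sub>v b + (P13 *\<^sub>v c + P14 *\<^sub>v d)) @\<^sub>v (P21 *\<^sub>v a + P22 *\<^sub>v b + (P23 *\<^sub>v c + P24 *\<^sub>v d))"
    by (rule append_vec_add[of _ n1 _ _ n2], insert assms, auto)
  have s2: "((P31 *\<^sub>v a + P32 *\<^sub>v b) @\<^sub>v (P41 *\<^sub>v a + P42 *\<^sub>v b)) + ((P33 *\<^sub>v c + P34 *\<^sub>v d) @\<^sub>v (P43 *\<^sub>v c + P44 *\<^sub>v d))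
     = (P31 *\<^sub>v a + P32 *\<^sub>v b + (P33 *\<^sub>v c + P34 *\<^sub>v d)) @\<^sub>v (P41 *\<^sub>v a + P42 *\<^sub>v b + (P43 *\<^sub>v c + P44 *\<^sub>v d))"
    by (rule append_vec_add[of _ n3 _ _ n4], insert assms, auto)
  show ?thesis
    unfolding e1 e2 e3 e4 e5 s1 s2
    using assms
    by (simp add: scalar_prod_append[of "a @\<^sub>v b" "n1+n2" "c @\<^sub>v d" "n3+n4"]
       scalar_prod_append[of a n1 b n2] scalar_prod_append[of c n3 d n4]
       scalar_prod_add_distrib[of _ n1] scalar_prod_add_distrib[of _ n2]
       scalar_prod_add_distrib[of _ n3] scalar_prod_add_distrib[of _ n4])
qed



lemma smult_mat_vec_assoc:
  fixes A :: "real mat"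
  assumes "dim_vec v = dim_col A"
  shows "(k \<cdot>\<^sub>m A) *\<^sub>v v = k \<cdot>\<^sub>v (A *\<^sub>v v)"
  using assms by (intro eq_vecI) (auto simp: scalar_prod_def sum_distrib_left ac_simps intro!: sum.cong)

lemma mult_mat_vec_uminus:
  fixes A :: "real mat"
  assumes "dim_vec v = dim_col A"
  shows "A *\<^sub>v (- v) = - (A *\<^sub>v v)"
  using assms by (intro eq_vecI) auto

lemma zero_mat_mult_vec:
  fixes d :: "real vec"
  assumes "dim_vec d = nc"
  shows "0\<^sub>m nr nc *\<^sub>v d = 0\<^sub>v nr"
  using assms by (intro eq_vecI) (auto simp: scalar_prod_def intro!: sum.neutral)

lemma psd_shift:
  assumes E: "E \<in> carrier_mat n n" and ps: "psd_mat (E - e \<cdot>\<^sub>m 1\<^sub>m n)" and x: "x \<in> carrier_vec n"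
  shows "e * (x \<bullet> x) \<le> x \<bullet> (E *\<^sub>v x)"
proof -
  have "0 \<le> x \<bullet> ((E - e \<cdot>\<^sub>m 1\<^sub>m n) *\<^sub>v x)" using ps x E unfolding psd_mat_def by auto
  also have "(E - e \<cdot>\<^sub>m 1\<^sub>m n) *\<^sub>v x = E *\<^sub>v x - e \<cdot>\<^sub>v x"
    using E x by (simp add: minus_mult_distrib_mat_vec smult_mat_vec_assoc)
  also have "x \<bullet> (E *\<^sub>v x - e \<cdot>\<^sub>v x) = x \<bullet> (E *\<^sub>v x) - e * (x \<bullet> x)"
    using E x by (simp add: scalar_prod_minus_distrib)
  finally show ?thesis by simp
qed

lemma inv_props:
  assumes E: "E \<in> carrier_mat n n" and Es: "transpose_mat E = E"
    and ps: "psd_mat (E - e \<cdot>\<^sub>m 1\<^sub>m n)" and e: "e > 0"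
  shows "mat_inv E \<in> carrier_mat n n" "E * mat_inv E = 1\<^sub>m n" "mat_inv E * E = 1\<^sub>m n"
    "transpose_mat (mat_inv E) = mat_inv E"
proof -
  have "det E \<noteq> 0"
  proof
    assume "det E = 0"
    then obtain v where v: "v \<in> carrier_vec n" "v \<noteq> 0\<^sub>v n" "E *\<^sub>v v = 0\<^sub>v n"
      using det_0_iff_vec_prod_zero[OF E] by auto
    have "e * (v \<bullet> v) \<le> v \<bullet> (E *\<^sub>v v)" by (rule psd_shift[OF E ps v(1)])
    also have "\<dots> = 0" using v by simp
    finally have "v \<bullet> v \<le> 0" using e by (simp add: mult_le_0_iff)
    moreover have "v \<bullet> v \<ge> 0" by (simp add: scalar_prod_def sum_nonneg)
    ultimately have "v \<bullet> v = 0" by simp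
    then have "\<forall>i<n. v $ i = 0"
      using v(1) unfolding scalar_prod_def
      by (subst (asm) sum_nonneg_eq_0_iff) auto
    then have "v = 0\<^sub>v n" using v(1) by (intro eq_vecI) auto
    with v(2) show False by simp
  qed
  from det_non_zero_imp_unit[OF E this, of "()"]
  obtain B where B: "B \<in> carrier_mat n n" "E * B = 1\<^sub>m n" "B * E = 1\<^sub>m n"
    unfolding Units_def ring_mat_def by auto
  have "mat_inv E \<in> carrier_mat (dim_row E) (dim_row E) \<and> E * mat_inv E = 1\<^sub>m (dim_row E) \<and> mat_inv E * E = 1\<^sub>m (dim_row E)"
    unfolding mat_inv_def by (rule someI[of _ B], insert B E, auto)
  then show P: "mat_inv E \<in> carrier_mat n n" "E * mat_inv E = 1\<^sub>m n" "mat_inv E * E = 1\<^sub>m n" using E by auto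
  have "transpose_mat (mat_inv E) * E = 1\<^sub>m n"
    using arg_cong[OF P(2), of transpose_mat] transpose_mult[OF E P(1)] Es by simp
  then have "transpose_mat (mat_inv E) * E * mat_inv E = mat_inv E" using P by simp
  moreover have "transpose_mat (mat_inv E) * E * mat_inv E = transpose_mat (mat_inv E)"
    using P E by (simp add: assoc_mult_mat[of _ n n _ n _ n])
  ultimately show "transpose_mat (mat_inv E) = mat_inv E" by simp
qed



lemma local_step:
  fixes A B F C G S H E P :: "real mat" and x v :: "real vec"
  assumes A: "A \<in> carrier_mat n n" and B: "B \<in> carrier_mat n m" and F: "F \<in> carrier_mat n m"
    and C: "C \<in> carrier_mat m n" and G: "G \<in> carrier_mat m n" and S: "S \<in> carrier_mat m m"
    and H: "H \<in> carrier_mat n n" and E: "E \<in> carrier_mat n n" and P: "P \<in> carrier_mat n n"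
    and EP: "E * P = 1\<^sub>m n" and PE: "P * E = 1\<^sub>m n" and Ps: "transpose_mat P = P"
    and Es: "transpose_mat E = E" and Hd: "diagonal_mat H" and Hp: "\<forall>j<n. H $$ (j, j) > 0"
    and Sd: "diagonal_mat S"
    and c3: "psd_mat
       (four_block_mat
          (four_block_mat E ((1/2) \<cdot>\<^sub>m (E * transpose_mat C))
                          ((1/2) \<cdot>\<^sub>m (C * E)) ((1/2) \<cdot>\<^sub>m S + (1/2) \<cdot>\<^sub>m transpose_mat S))
          (four_block_mat (transpose_mat (A * E + B * G)) E
                          (transpose_mat F) (0\<^sub>m m n))
          (four_block_mat (A * E + B * G) F
                          E (0\<^sub>m n m))
          (four_block_mat E (0\<^sub>m n n)
                          (0\<^sub>m n n) H))"
    and x: "x \<in> carrier_vec n" and v: "v \<in> carrier_vec m"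
  shows "((A + B * (G * P)) *\<^sub>v x + F *\<^sub>v v) \<bullet> (P *\<^sub>v ((A + B * (G * P)) *\<^sub>v x + F *\<^sub>v v))
     \<le> x \<bullet> (P *\<^sub>v x) + (C *\<^sub>v x) \<bullet> v + v \<bullet> (S *\<^sub>v v) - (\<Sum>j<n. (x $ j)^2 / H $$ (j, j))"
proof -
  define Acl where "Acl = A + B * (G * P)"
  define x' where "x' = Acl *\<^sub>v x + F *\<^sub>v v"
  define h where "h = vec n (\<lambda>j. x $ j / H $$ (j, j))"
  define a where "a = P *\<^sub>v x"
  define c where "c = - (P *\<^sub>v x')"
  define d where "d = - h"
  have Acl: "Acl \<in> carrier_mat n n" unfolding Acl_def using A B G P by auto
  have x': "x' \<in> carrier_vec n" unfolding x'_def using Acl F x v by auto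
  have h: "h \<in> carrier_vec n" unfolding h_def by auto
  have a: "a \<in> carrier_vec n" unfolding a_def using P x by auto
  have c: "c \<in> carrier_vec n" unfolding c_def using P x' by auto
  have d: "d \<in> carrier_vec n" unfolding d_def using h by auto
  have AEBG: "A * E + B * G \<in> carrier_mat n n" using A E B G by auto
  have St: "transpose_mat S = S" using S Sd unfolding diagonal_mat_def by (intro eq_matI) (auto, metis)
  have k1: "(A * E + B * G) *\<^sub>v a = Acl *\<^sub>v x"
  proof -
    have "(A * E + B * G) *\<^sub>v a = ((A * E + B * G) * P) *\<^sub>v x"
      unfolding a_def using AEBG P x by simp
    also have "(A * E + B * G) * P = A * E * P + B * G * P"
      by (rule add_mult_distrib_mat, insert A E B G P, auto)
    also have "\<dots> = Acl" unfolding Acl_def using A E B G P EP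
      by (simp add: assoc_mult_mat[of _ n n _ n _ n] assoc_mult_mat[of _ n m _ n _ n])
    finally show ?thesis .
  qed
  have k2: "E *\<^sub>v a = x" unfolding a_def
    using E P x EP by (simp flip: assoc_mult_mat_vec[OF E P x])
  have k3: "E *\<^sub>v c = - x'" unfolding c_def
    using E P x' EP by (simp add: mult_mat_vec_uminus flip: assoc_mult_mat_vec[OF E P x'])
  have k4: "H *\<^sub>v h = x"
  proof (rule eq_vecI)
    show "dim_vec (H *\<^sub>v h) = dim_vec x" using H x by simp
    fix i assume i: "i < dim_vec x"
    then have i': "i < n" using x by simp
    have "(H *\<^sub>v h) $ i = (\<Sum>l<n. H $$ (i, l) * h $ l)"
      using H h i' by (simp add: scalar_prod_def row_def lessThan_atLeast0 mult.commute)
    also have "\<dots> = (\<Sum>l<n. if l = i then H $$ (i, i) * h $ i else 0)"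
      using Hd H i' unfolding diagonal_mat_def by (intro sum.cong) auto
    also have "\<dots> = H $$ (i, i) * h $ i" using i' by simp
    also have "\<dots> = x $ i" using Hp i' unfolding h_def by force
    finally show "(H *\<^sub>v h) $ i = x $ i" .
  qed
  have xh: "x \<bullet> h = (\<Sum>j<n. (x $ j)^2 / H $$ (j, j))"
    using x unfolding h_def scalar_prod_def by (simp add: lessThan_atLeast0 power2_eq_square)
  define w where "w = (a @\<^sub>v v) @\<^sub>v (c @\<^sub>v d)"
  let ?Q = "four_block_mat
          (four_block_mat E ((1/2) \<cdot>\<^sub>m (E * transpose_mat C))
                          ((1/2) \<cdot>\<^sub>m (C * E)) ((1/2) \<cdot>\<^sub>m S + (1/2) \<cdot>\<^sub>m transpose_mat S))
          (four_block_mat (transpose_mat (A * E + B * G)) E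
                          (transpose_mat F) (0\<^sub>m m n))
          (four_block_mat (A * E + B * G) F
                          E (0\<^sub>m n m))
          (four_block_mat E (0\<^sub>m n n)
                          (0\<^sub>m n n) H)"
  have "dim_row ?Q = n + m + (n + n)" using E C S A B G F H by simp
  moreover have "w \<in> carrier_vec (n + m + (n + n))" unfolding w_def using a v c d by auto
  ultimately have "0 \<le> w \<bullet> (?Q *\<^sub>v w)" using c3 unfolding psd_mat_def by auto
  also have "w \<bullet> (?Q *\<^sub>v w) =
     a \<bullet> (E *\<^sub>v a) + a \<bullet> (((1/2) \<cdot>\<^sub>m (E * transpose_mat C)) *\<^sub>v v) + a \<bullet> (transpose_mat (A * E + B * G) *\<^sub>v c) + a \<bullet> (E *\<^sub>v d)
   + v \<bullet> (((1/2) \<cdot>\<^sub>m (C * E)) *\<^sub>v a) + v \<bullet> (((1/2) \<cdot>\<^sub>m S + (1/2) \<cdot>\<^sub>m transpose_mat S) *\<^sub>v v) + v \<bullet> (transpose_mat F *\<^sub>v c) + v \<bullet> (0\<^sub>m m n *\<^sub>v d)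
   + c \<bullet> ((A * E + B * G) *\<^sub>v a) + c \<bullet> (F *\<^sub>v v) + c \<bullet> (E *\<^sub>v c) + c \<bullet> (0\<^sub>m n n *\<^sub>v d)
   + d \<bullet> (E *\<^sub>v a) + d \<bullet> (0\<^sub>m n m *\<^sub>v v) + d \<bullet> (0\<^sub>m n n *\<^sub>v c) + d \<bullet> (H *\<^sub>v d)"
    unfolding w_def by (rule qf4, insert E C S A B G F H a v c d, auto)
  finally have main: "0 \<le> \<dots>" .
  have t11: "a \<bullet> (E *\<^sub>v a) = x \<bullet> (P *\<^sub>v x)" using k2 a x comm_scalar_prod[OF a x] unfolding a_def by simp
  have t12: "a \<bullet> (((1/2) \<cdot>\<^sub>m (E * transpose_mat C)) *\<^sub>v v) = (1/2) * (v \<bullet> (C *\<^sub>v x))"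
  proof -
    have "((1/2) \<cdot>\<^sub>m (E * transpose_mat C)) *\<^sub>v v = (1/2) \<cdot>\<^sub>v (E *\<^sub>v (transpose_mat C *\<^sub>v v))"
      using E C v by (simp add: smult_mat_vec_assoc)
    moreover have "a \<bullet> (E *\<^sub>v (transpose_mat C *\<^sub>v v)) = (transpose_mat E *\<^sub>v a) \<bullet> (transpose_mat C *\<^sub>v v)"
      using transpose_vec_mult_scalar[of E n n "transpose_mat C *\<^sub>v v" a] E C v a by simp
    moreover have "(transpose_mat C *\<^sub>v v) \<bullet> x = v \<bullet> (C *\<^sub>v x)"
      using transpose_vec_mult_scalar[OF C x v] .
    ultimately show ?thesis using Es k2 a C v x E comm_scalar_prod[of x n "transpose_mat C *\<^sub>v v"] by simp
  qed
  have t21: "v \<bullet> (((1/2) \<cdot>\<^sub>m (C * E)) *\<^sub>v a) = (1/2) * (v \<bullet> (C *\<^sub>v x))"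
    using C E a v k2 by (simp add: smult_mat_vec_assoc)
  have t22: "v \<bullet> (((1/2) \<cdot>\<^sub>m S + (1/2) \<cdot>\<^sub>m transpose_mat S) *\<^sub>v v) = v \<bullet> (S *\<^sub>v v)"
  proof -
    have "(1/2) \<cdot>\<^sub>m S + (1/2) \<cdot>\<^sub>m S = S" using S by (intro eq_matI) auto
    then show ?thesis using St by simp
  qed
  have t13: "a \<bullet> (transpose_mat (A * E + B * G) *\<^sub>v c) = c \<bullet> (Acl *\<^sub>v x)"
    using comm_scalar_prod[of a n "transpose_mat (A * E + B * G) *\<^sub>v c"] transpose_vec_mult_scalar[OF AEBG a c] k1 a c AEBG by simp
  have t14: "a \<bullet> (E *\<^sub>v d) = x \<bullet> d"
    using transpose_vec_mult_scalar[OF E d a] Es k2 by simp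
  have t23: "v \<bullet> (transpose_mat F *\<^sub>v c) = c \<bullet> (F *\<^sub>v v)"
    using comm_scalar_prod[of v m "transpose_mat F *\<^sub>v c"] transpose_vec_mult_scalar[OF F v c] F v c by simp
  have t24: "v \<bullet> (0\<^sub>m m n *\<^sub>v d) = 0" using v d by (simp add: zero_mat_mult_vec)
  have t34: "c \<bullet> (0\<^sub>m n n *\<^sub>v d) = 0" using c d by (simp add: zero_mat_mult_vec)
  have t42: "d \<bullet> (0\<^sub>m n m *\<^sub>v v) = 0" using v d by (simp add: zero_mat_mult_vec)
  have t43: "d \<bullet> (0\<^sub>m n n *\<^sub>v c) = 0" using c d by (simp add: zero_mat_mult_vec)
  have t41: "d \<bullet> (E *\<^sub>v a) = x \<bullet> d" using k2 comm_scalar_prod[OF d x] by simp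
  have t44: "d \<bullet> (H *\<^sub>v d) = x \<bullet> h"
    unfolding d_def using H h x k4 comm_scalar_prod[OF h x] by (simp add: mult_mat_vec_uminus)
  have xd: "x \<bullet> d = - (x \<bullet> h)" unfolding d_def using x h by simp
  have t33: "c \<bullet> (E *\<^sub>v c) = x' \<bullet> (P *\<^sub>v x')"
    using k3 c x' comm_scalar_prod[of x' n "P *\<^sub>v x'"] P unfolding c_def by simp
  have cc: "c \<bullet> (Acl *\<^sub>v x) + c \<bullet> (F *\<^sub>v v) = - (x' \<bullet> (P *\<^sub>v x'))"
  proof -
    have "c \<bullet> (Acl *\<^sub>v x) + c \<bullet> (F *\<^sub>v v) = c \<bullet> x'"
      unfolding x'_def using c Acl F x v by (simp add: scalar_prod_add_distrib[of c n])
    also have "\<dots> = - (x' \<bullet> (P *\<^sub>v x'))"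
      using c x' P comm_scalar_prod[of x' n "P *\<^sub>v x'"] unfolding c_def by simp
    finally show ?thesis .
  qed
  have cv: "(C *\<^sub>v x) \<bullet> v = v \<bullet> (C *\<^sub>v x)" using comm_scalar_prod[of v m "C *\<^sub>v x"] C x v by simp
  from main[unfolded t11 t12 t21 t22 t13 t14 t23 t24 t34 t42 t43 t41 t44 t33 k1 xd]
  have "0 \<le> x \<bullet> (P *\<^sub>v x) + v \<bullet> (C *\<^sub>v x) + v \<bullet> (S *\<^sub>v v) - 2 * (x \<bullet> h) + (x \<bullet> h)
     + (c \<bullet> (Acl *\<^sub>v x) + c \<bullet> (F *\<^sub>v v)) * 2 + x' \<bullet> (P *\<^sub>v x')" by (simp add: algebra_simps)
  then show ?thesis unfolding cc cv xh[symmetric] x'_def[symmetric] Acl_def[symmetric] by linarith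
qed



lemma sum_lessThan_add: "(\<Sum>c<a+(b::nat). f c) = (\<Sum>c<a. f c) + (\<Sum>j<b. f (a + j))"
  by (induction b) (auto simp: add_ac)

lemma offs_Suc: "offs nn (Suc i) = offs nn i + nn i"
  unfolding offs_def by simp

lemma offs_mono: "i \<le> i' \<Longrightarrow> offs nn i \<le> offs nn i'"
  unfolding offs_def by (rule sum_mono2) auto

lemma offs_lt: "i < i' \<Longrightarrow> offs nn i + nn i \<le> offs nn i'"
  using offs_mono[of "Suc i" i' nn] by (simp add: offs_Suc)

lemma sum_offs: "(\<Sum>c<offs nn M. f c) = (\<Sum>i<M. \<Sum>j<nn i. f (offs nn i + j))"
  by (induction M) (auto simp: offs_Suc sum_lessThan_add, simp add: offs_def)

lemma sum_blocks: "(\<Sum>r<(M::nat)*(m0::nat). f r) = (\<Sum>i<M. \<Sum>k<m0. f (i*m0 + k))"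
proof -
  have "offs (\<lambda>_. m0) M = M * m0" unfolding offs_def by simp
  then show ?thesis using sum_offs[where nn="\<lambda>_. m0" and M=M and f=f] unfolding offs_def by simp
qed

lemma wcs:
  fixes a b :: "'i \<Rightarrow> real"
  assumes "finite I" "\<forall>c\<in>I. a c \<ge> 0"
  shows "(\<Sum>c\<in>I. a c * b c)^2 \<le> (\<Sum>c\<in>I. a c) * (\<Sum>c\<in>I. a c * (b c)^2)"
proof -
  have "(\<Sum>c\<in>I. a c * b c)^2 = (\<Sum>c\<in>I. \<Sum>d\<in>I. (a c * b c) * (a d * b d))"
    by (simp add: power2_eq_square sum_product)
  also have "\<dots> \<le> (\<Sum>c\<in>I. \<Sum>d\<in>I. ((a c * (b c)^2) * a d + a c * (a d * (b d)^2)) / 2)"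
  proof (intro sum_mono)
    fix c d assume c: "c \<in> I" and d: "d \<in> I"
    have "0 \<le> a c * a d * (b c - b d)^2" using assms c d by simp
    then show "(a c * b c) * (a d * b d) \<le> ((a c * (b c)^2) * a d + a c * (a d * (b d)^2)) / 2"
      by (simp add: power2_eq_square algebra_simps)
  qed
  also have "\<dots> = ((\<Sum>c\<in>I. \<Sum>d\<in>I. (a c * (b c)^2) * a d) + (\<Sum>c\<in>I. \<Sum>d\<in>I. a c * (a d * (b d)^2))) / 2"
    by (simp only: add_divide_distrib sum.distrib flip: sum_divide_distrib)
  also have "\<dots> = ((\<Sum>c\<in>I. a c * (b c)^2) * (\<Sum>d\<in>I. a d) + (\<Sum>c\<in>I. a c) * (\<Sum>d\<in>I. a d * (b d)^2)) / 2"
    by (simp only: sum_product)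
  also have "\<dots> = (\<Sum>c\<in>I. a c) * (\<Sum>c\<in>I. a c * (b c)^2)" by simp
  finally show ?thesis .
qed

lemma schur_row:
  fixes u X :: "'i \<Rightarrow> real"
  assumes "finite I" "s > 0" "(\<Sum>c\<in>I. \<bar>u c\<bar>) > 0 \<longrightarrow> s \<le> 1 / (\<Sum>c\<in>I. \<bar>u c\<bar>)"
  shows "s * (\<Sum>c\<in>I. u c * X c)^2 \<le> (\<Sum>c\<in>I. \<bar>u c\<bar> * (X c)^2)"
proof -
  let ?R = "\<Sum>c\<in>I. \<bar>u c\<bar>"
  have "(\<Sum>c\<in>I. u c * X c)^2 \<le> (\<Sum>c\<in>I. \<bar>u c\<bar> * \<bar>X c\<bar>)^2"
  proof -
    have "\<bar>\<Sum>c\<in>I. u c * X c\<bar> \<le> (\<Sum>c\<in>I. \<bar>u c\<bar> * \<bar>X c\<bar>)"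
      by (rule order_trans[OF sum_abs]) (simp add: abs_mult)
    then show ?thesis by (metis abs_ge_zero power2_abs power_mono)
  qed
  also have "\<dots> \<le> ?R * (\<Sum>c\<in>I. \<bar>u c\<bar> * \<bar>X c\<bar>^2)"
    by (rule wcs) (use assms in auto)
  finally have cs: "(\<Sum>c\<in>I. u c * X c)^2 \<le> ?R * (\<Sum>c\<in>I. \<bar>u c\<bar> * (X c)^2)" by simp
  have T0: "0 \<le> (\<Sum>c\<in>I. \<bar>u c\<bar> * (X c)^2)" by (intro sum_nonneg) auto
  show ?thesis
  proof (cases "?R > 0")
    case True
    then have "s * ?R \<le> 1" using assms by (simp add: field_simps)
    have "s * (\<Sum>c\<in>I. u c * X c)^2 \<le> s * (?R * (\<Sum>c\<in>I. \<bar>u c\<bar> * (X c)^2))"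
      using cs assms by (intro mult_left_mono) auto
    also have "\<dots> = (s * ?R) * (\<Sum>c\<in>I. \<bar>u c\<bar> * (X c)^2)" by simp
    also have "\<dots> \<le> 1 * (\<Sum>c\<in>I. \<bar>u c\<bar> * (X c)^2)"
      using \<open>s * ?R \<le> 1\<close> T0 by (intro mult_right_mono) auto
    finally show ?thesis by simp
  next
    case False
    then have "?R = 0" by (metis abs_ge_zero linorder_not_less order_antisym sum_nonneg)
    then have "\<forall>c\<in>I. u c = 0" using assms(1) by (simp add: sum_nonneg_eq_0_iff)
    then show ?thesis using T0 by simp
  qed
qed


lemma mv_idx:
  fixes A :: "real mat"
  assumes "A \<in> carrier_mat nr nc" "v \<in> carrier_vec nc" "r < nr"
  shows "(A *\<^sub>v v) $ r = (\<Sum>c<nc. A $$ (r, c) * v $ c)"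
  using assms by (auto simp: scalar_prod_def lessThan_atLeast0 mult.commute intro!: sum.cong)

lemma sp_idx:
  fixes v w :: "real vec"
  assumes "w \<in> carrier_vec n"
  shows "v \<bullet> w = (\<Sum>c<n. v $ c * w $ c)"
  using assms by (auto simp: scalar_prod_def lessThan_atLeast0)

lemma diag_qf:
  fixes S :: "real mat"
  assumes S: "S \<in> carrier_mat m m" and Sd: "diagonal_mat S" and w: "w \<in> carrier_vec m"
  shows "w \<bullet> (S *\<^sub>v w) = (\<Sum>k<m. S $$ (k, k) * (w $ k)^2)"
proof -
  have "w \<bullet> (S *\<^sub>v w) = (\<Sum>k<m. w $ k * (S *\<^sub>v w) $ k)" by (rule sp_idx) (use S w in simp)
  also have "\<dots> = (\<Sum>k<m. w $ k * (\<Sum>c<m. if c = k then S $$ (k, k) * w $ k else 0))"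
  proof (intro sum.cong refl)
    fix k assume k: "k \<in> {..<m}"
    have "(S *\<^sub>v w) $ k = (\<Sum>c<m. S $$ (k, c) * w $ c)" using mv_idx[OF S w] k by simp
    also have "\<dots> = (\<Sum>c<m. if c = k then S $$ (k, k) * w $ k else 0)"
      using Sd S k unfolding diagonal_mat_def by (intro sum.cong refl) auto
    finally show "w $ k * (S *\<^sub>v w) $ k = w $ k * (\<Sum>c<m. if c = k then S $$ (k, k) * w $ k else 0)" by simp
  qed
  also have "\<dots> = (\<Sum>k<m. S $$ (k, k) * (w $ k)^2)"
    by (intro sum.cong refl) (simp add: power2_eq_square)
  finally show ?thesis .
qed

definition Xv :: "nat \<Rightarrow> (nat \<Rightarrow> nat) \<Rightarrow> (nat \<Rightarrow> real vec) \<Rightarrow> real vec" where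
  "Xv M nn x = vec (offs nn M) (\<lambda>c. \<Sum>i<M. if offs nn i \<le> c \<and> c < offs nn i + nn i then x i $ (c - offs nn i) else 0)"

lemma blk_iff:
  assumes "j < nn i'"
  shows "(offs nn i \<le> offs nn i' + j \<and> offs nn i' + j < offs nn i + nn i) \<longleftrightarrow> i = i'"
proof (cases i i' rule: linorder_cases)
  case less then show ?thesis using offs_lt[OF less, of nn] by auto
next
  case greater then show ?thesis using offs_lt[OF greater, of nn] assms by auto
qed (use assms in auto)

lemma offs_le_M: "i < M \<Longrightarrow> offs nn i + nn i \<le> offs nn M"
  using offs_lt by blast

lemma Xv_idx:
  assumes "i < M" "j < nn i"
  shows "Xv M nn x $ (offs nn i + j) = x i $ j"
proof -
  have lt: "offs nn i + j < offs nn M" using offs_le_M[OF assms(1), of nn] assms(2) by simp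
  have "Xv M nn x $ (offs nn i + j) = (\<Sum>i'<M. if i' = i then x i $ j else 0)"
    unfolding Xv_def using lt
    by (auto intro!: sum.cong simp: blk_iff[where nn=nn and i'=i and j=j, OF assms(2)] eq_commute[of i])
  also have "\<dots> = x i $ j" using assms(1) by simp
  finally show ?thesis .
qed

lemma Xv_carrier: "Xv M nn x \<in> carrier_vec (offs nn M)" unfolding Xv_def by simp

lemma Cglob_carrier: "Cglob M m0 nn C \<in> carrier_mat (M * m0) (offs nn M)"
  unfolding Cglob_def by simp

lemma Ltil_carrier: "Ltil M m0 N l \<in> carrier_mat (M * m0) (M * m0)"
  unfolding Ltil_def by simp

lemma divmod_blk:
  assumes "k < (m0::nat)"
  shows "(i * m0 + k) div m0 = i" "(i * m0 + k) mod m0 = k"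
  using assms by auto

lemma blk_lt: "i < M \<Longrightarrow> k < m0 \<Longrightarrow> i * m0 + k < M * (m0::nat)"
proof -
  assume "i < M" "k < m0"
  then have "i * m0 + k < i * m0 + m0" by simp
  also have "\<dots> = Suc i * m0" by simp
  also have "\<dots> \<le> M * m0" using \<open>i < M\<close> by (intro mult_right_mono) auto
  finally show ?thesis .
qed

lemma Cg_Xv:
  assumes dimC: "\<forall>i<M. C i \<in> carrier_mat m0 (nn i)"
    and i: "i < M" and k: "k < m0"
  shows "(Cglob M m0 nn C *\<^sub>v Xv M nn x) $ (i * m0 + k) = (\<Sum>j<nn i. C i $$ (k, j) * x i $ j)"
proof -
  have r: "i * m0 + k < M * m0" using blk_lt[OF i k] .
  have "(Cglob M m0 nn C *\<^sub>v Xv M nn x) $ (i * m0 + k)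
      = (\<Sum>c<offs nn M. Cglob M m0 nn C $$ (i * m0 + k, c) * Xv M nn x $ c)"
    by (rule mv_idx[OF Cglob_carrier Xv_carrier r])
  also have "\<dots> = (\<Sum>i'<M. \<Sum>j<nn i'. Cglob M m0 nn C $$ (i * m0 + k, offs nn i' + j) * Xv M nn x $ (offs nn i' + j))"
    by (rule sum_offs)
  also have "\<dots> = (\<Sum>i'<M. if i' = i then (\<Sum>j<nn i. C i $$ (k, j) * x i $ j) else 0)"
  proof (intro sum.cong refl)
    fix i' assume i': "i' \<in> {..<M}"
    show "(\<Sum>j<nn i'. Cglob M m0 nn C $$ (i * m0 + k, offs nn i' + j) * Xv M nn x $ (offs nn i' + j))
       = (if i' = i then (\<Sum>j<nn i. C i $$ (k, j) * x i $ j) else 0)"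
    proof (cases "i' = i")
      case True
      then show ?thesis using i' r k offs_le_M[of i' M nn]
        by (auto simp: Cglob_def divmod_blk Xv_idx intro!: sum.cong)
    next
      case False
      have "Cglob M m0 nn C $$ (i * m0 + k, offs nn i' + j) = 0" if j: "j < nn i'" for j
      proof -
        have "offs nn i' + j < offs nn M" using offs_le_M[of i' M nn] i' j by simp
        then show ?thesis using r k False blk_iff[where nn=nn and i'=i' and j=j and i=i, OF j]
          by (auto simp add: Cglob_def divmod_blk Let_def)
      qed
      then show ?thesis using False by simp
    qed
  qed
  also have "\<dots> = (\<Sum>j<nn i. C i $$ (k, j) * x i $ j)" using i by simp
  finally show ?thesis .
qed


lemma L_Y:
  assumes Y: "Y \<in> carrier_vec (M * m0)" and HY: "\<forall>i<M. \<forall>k<m0. Y $ (i * m0 + k) = yy i $ k"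
    and Nsub: "\<forall>i<M. N i \<subseteq> {0..<M} - {i}" and i: "i < M" and k: "k < m0"
  shows "(Ltil M m0 N l *\<^sub>v Y) $ (i * m0 + k) = - (\<Sum>j\<in>N i. l i j * (yy j $ k - yy i $ k))"
proof -
  let ?coef = "\<lambda>j. if i = j then (\<Sum>j'\<in>N i. l i j') else if j \<in> N i then - l i j else 0"
  have r: "i * m0 + k < M * m0" using blk_lt[OF i k] .
  have fin: "finite (N i)" using Nsub i by (meson finite_Diff finite_atLeastLessThan finite_subset)
  have "(Ltil M m0 N l *\<^sub>v Y) $ (i * m0 + k) = (\<Sum>c<M * m0. Ltil M m0 N l $$ (i * m0 + k, c) * Y $ c)"
    by (rule mv_idx[OF Ltil_carrier Y r])
  also have "\<dots> = (\<Sum>j<M. \<Sum>k'<m0. Ltil M m0 N l $$ (i * m0 + k, j * m0 + k') * Y $ (j * m0 + k'))"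
    by (rule sum_blocks)
  also have "\<dots> = (\<Sum>j<M. ?coef j * yy j $ k)"
  proof (intro sum.cong refl)
    fix j assume j: "j \<in> {..<M}"
    have "(\<Sum>k'<m0. Ltil M m0 N l $$ (i * m0 + k, j * m0 + k') * Y $ (j * m0 + k'))
        = (\<Sum>k'<m0. if k' = k then ?coef j * yy j $ k else 0)"
    proof (intro sum.cong refl)
      fix k' assume k': "k' \<in> {..<m0}"
      have c: "j * m0 + k' < M * m0" using blk_lt[of j M k' m0] j k' by simp
      show "Ltil M m0 N l $$ (i * m0 + k, j * m0 + k') * Y $ (j * m0 + k') = (if k' = k then ?coef j * yy j $ k else 0)"
        using r c k k' j HY unfolding Ltil_def by (auto simp: divmod_blk Let_def)
    qed
    also have "\<dots> = ?coef j * yy j $ k" using k by simp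
    finally show "(\<Sum>k'<m0. Ltil M m0 N l $$ (i * m0 + k, j * m0 + k') * Y $ (j * m0 + k')) = ?coef j * yy j $ k" .
  qed
  also have "\<dots> = (\<Sum>j<M. (if j = i then (\<Sum>j'\<in>N i. l i j') * yy i $ k else 0) + (if j \<in> N i then - (l i j * yy j $ k) else 0))"
    using Nsub i by (intro sum.cong refl) auto
  also have "\<dots> = (\<Sum>j'\<in>N i. l i j') * yy i $ k + (\<Sum>j<M. if j \<in> N i then - (l i j * yy j $ k) else 0)"
    using i by (simp add: sum.distrib)
  also have "(\<Sum>j<M. if j \<in> N i then - (l i j * yy j $ k) else 0) = (\<Sum>j\<in>{..<M} \<inter> N i. - (l i j * yy j $ k))"
    by (simp add: sum.inter_restrict)
  also have "{..<M} \<inter> N i = N i"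
  proof -
    have "N i \<subseteq> {0..<M}" using Nsub i by auto
    then show ?thesis by auto
  qed
  also have "(\<Sum>j'\<in>N i. l i j') * yy i $ k + (\<Sum>j\<in>N i. - (l i j * yy j $ k)) = - (\<Sum>j\<in>N i. l i j * (yy j $ k - yy i $ k))"
  proof -
    have "(\<Sum>j\<in>N i. l i j * (yy j $ k - yy i $ k)) = (\<Sum>j\<in>N i. l i j * yy j $ k) - (\<Sum>j'\<in>N i. l i j') * yy i $ k"
      by (simp add: right_diff_distrib sum_subtractf sum_distrib_right)
    then show ?thesis by (simp add: sum_negf)
  qed
  finally show ?thesis .
qed


lemma global_ineq:
  fixes x vv :: "nat \<Rightarrow> real vec" and C S H :: "nat \<Rightarrow> real mat"
  assumes dimC: "\<forall>i<M. C i \<in> carrier_mat m0 (nn i)"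
    and Nsub: "\<forall>i<M. N i \<subseteq> {0..<M} - {i}"
    and Lpsd: "\<forall>w \<in> carrier_vec (M * m0). 0 \<le> w \<bullet> (Ltil M m0 N l *\<^sub>v w)"
    and eps0: "eps0 > 0"
    and dimS: "\<forall>i<M. S i \<in> carrier_mat m0 m0"
    and c2S: "\<forall>i<M. diagonal_mat (S i) \<and> (\<forall>k<m0. S i $$ (k, k) > 0)"
    and Hpos: "\<forall>i<M. \<forall>j<nn i. H i $$ (j, j) > 0"
    and c4: "\<forall>i<M. \<forall>j<nn i. H i $$ (j, j) \<le>
       1 / (row_norm1 (transpose_mat (Cglob M m0 nn C) * transpose_mat (Ltil M m0 N l))
                      (offs nn i + j) + eps0)"
    and c5: "\<forall>i<M. \<forall>k<m0.
       row_norm1 (Ltil M m0 N l * Cglob M m0 nn C) (i * m0 + k) > 0 \<longrightarrow>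
       S i $$ (k, k) \<le> 1 / row_norm1 (Ltil M m0 N l * Cglob M m0 nn C) (i * m0 + k)"
    and xs: "\<forall>i<M. x i \<in> carrier_vec (nn i)"
    and vv: "\<forall>i<M. vv i = vec m0 (\<lambda>k. \<Sum>j\<in>N i. l i j * ((C j *\<^sub>v x j) $ k - (C i *\<^sub>v x i) $ k))"
  shows "(\<Sum>i<M. (C i *\<^sub>v x i) \<bullet> vv i + vv i \<bullet> (S i *\<^sub>v vv i) - (\<Sum>j<nn i. (x i $ j)^2 / H i $$ (j, j)))
      \<le> - eps0 * (\<Sum>i<M. \<Sum>j<nn i. (x i $ j)^2)"
proof -
  define Cg where "Cg = Cglob M m0 nn C"
  define L where "L = Ltil M m0 N l"
  define X where "X = Xv M nn x"
  define Y where "Y = Cg *\<^sub>v X"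
  define U where "U = L * Cg"
  define W where "W = transpose_mat Cg * transpose_mat L"
  have Cg: "Cg \<in> carrier_mat (M * m0) (offs nn M)" unfolding Cg_def by (rule Cglob_carrier)
  have L: "L \<in> carrier_mat (M * m0) (M * m0)" unfolding L_def by (rule Ltil_carrier)
  have X: "X \<in> carrier_vec (offs nn M)" unfolding X_def by (rule Xv_carrier)
  have Y: "Y \<in> carrier_vec (M * m0)" unfolding Y_def using Cg X by simp
  have U: "U \<in> carrier_mat (M * m0) (offs nn M)" unfolding U_def using Cg L by simp
  have WU: "W = transpose_mat U" unfolding W_def U_def using transpose_mult[OF L Cg] by simp
  have HY: "\<forall>i<M. \<forall>k<m0. Y $ (i * m0 + k) = (C i *\<^sub>v x i) $ k"
  proof (intro allI impI)
    fix i k assume i: "i < M" and k: "k < m0"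
    have "Y $ (i * m0 + k) = (\<Sum>j<nn i. C i $$ (k, j) * x i $ j)"
      unfolding Y_def Cg_def X_def by (rule Cg_Xv[OF dimC i k])
    also have "\<dots> = (C i *\<^sub>v x i) $ k" using dimC xs i k mv_idx[of "C i" m0 "nn i" "x i" k] by simp
    finally show "Y $ (i * m0 + k) = (C i *\<^sub>v x i) $ k" .
  qed
  have vvc: "\<forall>i<M. vv i \<in> carrier_vec m0" using vv by simp
  have Hv: "\<forall>i<M. \<forall>k<m0. vv i $ k = - ((U *\<^sub>v X) $ (i * m0 + k))"
  proof (intro allI impI)
    fix i k assume i: "i < M" and k: "k < m0"
    have "(L *\<^sub>v Y) $ (i * m0 + k) = - (\<Sum>j\<in>N i. l i j * ((C j *\<^sub>v x j) $ k - (C i *\<^sub>v x i) $ k))"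
      unfolding L_def by (rule L_Y[OF Y HY Nsub i k])
    moreover have "L *\<^sub>v Y = U *\<^sub>v X" unfolding Y_def U_def using L Cg X by simp
    ultimately show "vv i $ k = - ((U *\<^sub>v X) $ (i * m0 + k))" using vv i k by simp
  qed
  have LYU: "L *\<^sub>v Y = U *\<^sub>v X" unfolding Y_def U_def using L Cg X by simp
  have pa: "(\<Sum>i<M. (C i *\<^sub>v x i) \<bullet> vv i) \<le> 0"
  proof -
    have "(\<Sum>i<M. (C i *\<^sub>v x i) \<bullet> vv i) = (\<Sum>i<M. \<Sum>k<m0. Y $ (i * m0 + k) * - ((U *\<^sub>v X) $ (i * m0 + k)))"
    proof (intro sum.cong refl)
      fix i assume i: "i \<in> {..<M}"
      have "(C i *\<^sub>v x i) \<bullet> vv i = (\<Sum>k<m0. (C i *\<^sub>v x i) $ k * vv i $ k)"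
        using vvc i sp_idx[of "vv i" m0] by simp
      then show "(C i *\<^sub>v x i) \<bullet> vv i = (\<Sum>k<m0. Y $ (i * m0 + k) * - ((U *\<^sub>v X) $ (i * m0 + k)))"
        using HY Hv i by simp
    qed
    also have "\<dots> = (\<Sum>r<M * m0. Y $ r * - ((U *\<^sub>v X) $ r))" by (rule sum_blocks[symmetric])
    also have "\<dots> = - (\<Sum>r<M * m0. Y $ r * (L *\<^sub>v Y) $ r)"
      using LYU by (simp add: sum_negf)
    also have "\<dots> = - (Y \<bullet> (L *\<^sub>v Y))"
      using sp_idx[of "L *\<^sub>v Y" "M * m0" Y] L Y by simp
    finally show ?thesis using Lpsd Y unfolding L_def by auto
  qed
  have pb1: "S i $$ (k, k) * (vv i $ k)^2 \<le> (\<Sum>c<offs nn M. \<bar>U $$ (i * m0 + k, c)\<bar> * (X $ c)^2)"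
    if i: "i < M" and k: "k < m0" for i k
  proof -
    have r: "i * m0 + k < M * m0" using blk_lt[OF i k] .
    have "(vv i $ k)^2 = (\<Sum>c<offs nn M. U $$ (i * m0 + k, c) * X $ c)^2"
      using Hv i k mv_idx[OF U X r] by simp
    moreover have "S i $$ (k, k) * (\<Sum>c<offs nn M. U $$ (i * m0 + k, c) * X $ c)^2
        \<le> (\<Sum>c<offs nn M. \<bar>U $$ (i * m0 + k, c)\<bar> * (X $ c)^2)"
    proof (rule schur_row)
      show "S i $$ (k, k) > 0" using c2S i k by auto
      have "row_norm1 U (i * m0 + k) = (\<Sum>c<offs nn M. \<bar>U $$ (i * m0 + k, c)\<bar>)"
        unfolding row_norm1_def using U by simp
      then show "(\<Sum>c<offs nn M. \<bar>U $$ (i * m0 + k, c)\<bar>) > 0 \<longrightarrow> S i $$ (k, k) \<le> 1 / (\<Sum>c<offs nn M. \<bar>U $$ (i * m0 + k, c)\<bar>)"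
        using c5[rule_format, of i k] i k unfolding U_def L_def Cg_def by simp
    qed simp
    ultimately show ?thesis by simp
  qed
  have pb: "(\<Sum>i<M. vv i \<bullet> (S i *\<^sub>v vv i)) \<le> (\<Sum>i<M. \<Sum>j<nn i. row_norm1 W (offs nn i + j) * (x i $ j)^2)"
  proof -
    have "(\<Sum>i<M. vv i \<bullet> (S i *\<^sub>v vv i)) = (\<Sum>i<M. \<Sum>k<m0. S i $$ (k, k) * (vv i $ k)^2)"
      using dimS c2S vvc by (intro sum.cong refl) (simp add: diag_qf)
    also have "\<dots> \<le> (\<Sum>i<M. \<Sum>k<m0. \<Sum>c<offs nn M. \<bar>U $$ (i * m0 + k, c)\<bar> * (X $ c)^2)"
      using pb1 by (intro sum_mono) auto
    also have "\<dots> = (\<Sum>r<M * m0. \<Sum>c<offs nn M. \<bar>U $$ (r, c)\<bar> * (X $ c)^2)"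
      by (rule sum_blocks[symmetric])
    also have "\<dots> = (\<Sum>c<offs nn M. \<Sum>r<M * m0. \<bar>U $$ (r, c)\<bar> * (X $ c)^2)"
      by (rule sum.swap)
    also have "\<dots> = (\<Sum>c<offs nn M. row_norm1 W c * (X $ c)^2)"
    proof (intro sum.cong refl)
      fix c assume c: "c \<in> {..<offs nn M}"
      have "row_norm1 W c = (\<Sum>r<M * m0. \<bar>U $$ (r, c)\<bar>)"
        unfolding row_norm1_def WU using U c by simp
      then show "(\<Sum>r<M * m0. \<bar>U $$ (r, c)\<bar> * (X $ c)^2) = row_norm1 W c * (X $ c)^2"
        by (simp add: sum_distrib_right)
    qed
    also have "\<dots> = (\<Sum>i<M. \<Sum>j<nn i. row_norm1 W (offs nn i + j) * (X $ (offs nn i + j))^2)"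
      by (rule sum_offs)
    also have "\<dots> = (\<Sum>i<M. \<Sum>j<nn i. row_norm1 W (offs nn i + j) * (x i $ j)^2)"
      unfolding X_def by (intro sum.cong refl) (simp add: Xv_idx)
    finally show ?thesis .
  qed
  have pc: "row_norm1 W (offs nn i + j) * (x i $ j)^2 \<le> (x i $ j)^2 / H i $$ (j, j) - eps0 * (x i $ j)^2"
    if i: "i < M" and j: "j < nn i" for i j
  proof -
    let ?R = "row_norm1 W (offs nn i + j)"
    let ?h = "H i $$ (j, j)"
    have R0: "?R \<ge> 0" unfolding row_norm1_def by (intro sum_nonneg) auto
    have h0: "?h > 0" using Hpos i j by auto
    have "?h \<le> 1 / (?R + eps0)" using c4 i j unfolding W_def Cg_def L_def by auto
    then have "?h * (?R + eps0) \<le> 1" using R0 eps0 by (simp add: le_divide_eq)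
    then have "?R + eps0 \<le> 1 / ?h" using h0 by (simp add: le_divide_eq mult.commute)
    then have "(?R + eps0) * (x i $ j)^2 \<le> (1 / ?h) * (x i $ j)^2" by (intro mult_right_mono) auto
    then show ?thesis by (simp add: algebra_simps)
  qed
  have "(\<Sum>i<M. \<Sum>j<nn i. row_norm1 W (offs nn i + j) * (x i $ j)^2)
      \<le> (\<Sum>i<M. \<Sum>j<nn i. (x i $ j)^2 / H i $$ (j, j) - eps0 * (x i $ j)^2)"
    using pc by (intro sum_mono) auto
  also have "\<dots> = (\<Sum>i<M. \<Sum>j<nn i. (x i $ j)^2 / H i $$ (j, j)) - eps0 * (\<Sum>i<M. \<Sum>j<nn i. (x i $ j)^2)"
    by (simp add: sum_subtractf sum_distrib_left)
  finally have pbc: "(\<Sum>i<M. \<Sum>j<nn i. row_norm1 W (offs nn i + j) * (x i $ j)^2)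
      \<le> (\<Sum>i<M. \<Sum>j<nn i. (x i $ j)^2 / H i $$ (j, j)) - eps0 * (\<Sum>i<M. \<Sum>j<nn i. (x i $ j)^2)" .
  have "(\<Sum>i<M. (C i *\<^sub>v x i) \<bullet> vv i + vv i \<bullet> (S i *\<^sub>v vv i) - (\<Sum>j<nn i. (x i $ j)^2 / H i $$ (j, j)))
     = (\<Sum>i<M. (C i *\<^sub>v x i) \<bullet> vv i) + (\<Sum>i<M. vv i \<bullet> (S i *\<^sub>v vv i)) - (\<Sum>i<M. \<Sum>j<nn i. (x i $ j)^2 / H i $$ (j, j))"
    by (simp add: sum.distrib sum_subtractf)
  then show ?thesis using pa pb pbc by linarith
qed


lemma quad_bounds:
  fixes E P :: "real mat"
  assumes E: "E \<in> carrier_mat n n" and P: "P \<in> carrier_mat n n" and EP: "E * P = 1\<^sub>m n"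
    and ps: "psd_mat (E - e \<cdot>\<^sub>m 1\<^sub>m n)" and e: "e > 0" and z: "z \<in> carrier_vec n"
  shows "0 \<le> z \<bullet> (P *\<^sub>v z)" "z \<bullet> (P *\<^sub>v z) \<le> (1 / e) * (\<Sum>k<n. (z $ k)^2)"
proof -
  define w where "w = P *\<^sub>v z"
  have w: "w \<in> carrier_vec n" unfolding w_def using P z by simp
  have Ew: "E *\<^sub>v w = z" unfolding w_def using E P z EP by (simp flip: assoc_mult_mat_vec[OF E P z])
  have zw: "z \<bullet> (P *\<^sub>v z) = w \<bullet> (E *\<^sub>v w)"
  proof -
    have "z \<bullet> (P *\<^sub>v z) = (E *\<^sub>v w) \<bullet> w" using Ew unfolding w_def by simp
    also have "\<dots> = w \<bullet> (E *\<^sub>v w)" using comm_scalar_prod[of "E *\<^sub>v w" n w] E w by simp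
    finally show ?thesis .
  qed
  have ge: "e * (w \<bullet> w) \<le> w \<bullet> (E *\<^sub>v w)" by (rule psd_shift[OF E ps w])
  have ww: "w \<bullet> w = (\<Sum>k<n. (w $ k)^2)" using sp_idx[OF w, of w] by (simp add: power2_eq_square)
  have ww0: "0 \<le> w \<bullet> w" unfolding ww by (intro sum_nonneg) auto
  show "0 \<le> z \<bullet> (P *\<^sub>v z)" using zw ge ww0 e by (metis mult_nonneg_nonneg less_le order_trans)
  have "z \<bullet> (P *\<^sub>v z) = (\<Sum>k<n. z $ k * w $ k)" unfolding w_def[symmetric] using sp_idx[OF w, of z] .
  also have "\<dots> \<le> (\<Sum>k<n. (z $ k)^2 / (2 * e) + e * (w $ k)^2 / 2)"
  proof (intro sum_mono)
    fix k
    have "0 \<le> (z $ k - e * w $ k)^2" by simp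
    then have "2 * e * (z $ k * w $ k) \<le> (z $ k)^2 + e^2 * (w $ k)^2"
      by (simp add: power2_eq_square algebra_simps)
    then show "z $ k * w $ k \<le> (z $ k)^2 / (2 * e) + e * (w $ k)^2 / 2"
      using e by (simp add: field_simps power2_eq_square)
  qed
  also have "\<dots> = (\<Sum>k<n. (z $ k)^2) / (2 * e) + e * (\<Sum>k<n. (w $ k)^2) / 2"
    by (simp add: sum.distrib sum_divide_distrib sum_distrib_left)
  finally have up: "z \<bullet> (P *\<^sub>v z) \<le> (\<Sum>k<n. (z $ k)^2) / (2 * e) + e * (\<Sum>k<n. (w $ k)^2) / 2" .
  have eq: "(1 / e) * (\<Sum>k<n. (z $ k)^2) = 2 * ((\<Sum>k<n. (z $ k)^2) / (2 * e))" using e by simp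
  show "z \<bullet> (P *\<^sub>v z) \<le> (1 / e) * (\<Sum>k<n. (z $ k)^2)"
  proof -
    have ew: "e * (\<Sum>k<n. (w $ k)^2) = e * (w \<bullet> w)" using ww by simp
    show ?thesis using up ge zw ew eq by linarith
  qed
qed

theorem theorem1:
  fixes M m0 :: nat and nn :: "nat \<Rightarrow> nat"
    and A B F C :: "nat \<Rightarrow> real mat"
    and N :: "nat \<Rightarrow> nat set" and l :: "nat \<Rightarrow> nat \<Rightarrow> real"
    and eps0 :: real and eps :: "nat \<Rightarrow> real"
    and S G E H :: "nat \<Rightarrow> real mat"
  assumes M: "M \<ge> 1" and m0: "m0 \<ge> 1"
    and dimA: "\<forall>i<M. A i \<in> carrier_mat (nn i) (nn i)"
    and dimB: "\<forall>i<M. B i \<in> carrier_mat (nn i) m0"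
    and dimF: "\<forall>i<M. F i \<in> carrier_mat (nn i) m0"
    and dimC: "\<forall>i<M. C i \<in> carrier_mat m0 (nn i)"
    and Nsub: "\<forall>i<M. N i \<subseteq> {0..<M} - {i}"
    and Lpsd: "\<forall>w \<in> carrier_vec (M * m0). 0 \<le> w \<bullet> (Ltil M m0 N l *\<^sub>v w)"
    and eps0: "eps0 > 0" and eps: "\<forall>i<M. eps i > 0"
    and dimS: "\<forall>i<M. S i \<in> carrier_mat m0 m0"
    and dimG: "\<forall>i<M. G i \<in> carrier_mat m0 (nn i)"
    and dimE: "\<forall>i<M. E i \<in> carrier_mat (nn i) (nn i)"
    and dimH: "\<forall>i<M. H i \<in> carrier_mat (nn i) (nn i)"
    and Esym: "\<forall>i<M. transpose_mat (E i) = E i"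
    and c1: "\<forall>i<M. psd_mat (E i - eps i \<cdot>\<^sub>m 1\<^sub>m (nn i))"
    and c2H: "\<forall>i<M. diagonal_mat (H i) \<and> (\<forall>j<nn i. H i $$ (j, j) > 0)"
    and c2S: "\<forall>i<M. diagonal_mat (S i) \<and> (\<forall>k<m0. S i $$ (k, k) > 0)"
    and c3: "\<forall>i<M. psd_mat
       (four_block_mat
          (four_block_mat (E i) ((1/2) \<cdot>\<^sub>m (E i * transpose_mat (C i)))
                          ((1/2) \<cdot>\<^sub>m (C i * E i)) ((1/2) \<cdot>\<^sub>m S i + (1/2) \<cdot>\<^sub>m transpose_mat (S i)))
          (four_block_mat (transpose_mat (A i * E i + B i * G i)) (E i)
                          (transpose_mat (F i)) (0\<^sub>m m0 (nn i)))
          (four_block_mat (A i * E i + B i * G i) (F i)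
                          (E i) (0\<^sub>m (nn i) m0))
          (four_block_mat (E i) (0\<^sub>m (nn i) (nn i))
                          (0\<^sub>m (nn i) (nn i)) (H i)))"
    and c4: "\<forall>i<M. \<forall>j<nn i. H i $$ (j, j) \<le>
       1 / (row_norm1 (transpose_mat (Cglob M m0 nn C) * transpose_mat (Ltil M m0 N l))
                      (offs nn i + j) + eps0)"
    and c5: "\<forall>i<M. \<forall>k<m0.
       row_norm1 (Ltil M m0 N l * Cglob M m0 nn C) (i * m0 + k) > 0 \<longrightarrow>
       S i $$ (k, k) \<le> 1 / row_norm1 (Ltil M m0 N l * Cglob M m0 nn C) (i * m0 + k)"
  shows "cl_asymp_stable M nn A B F C (\<lambda>i. G i * mat_inv (E i)) N l"
proof -
  define P where "P = (\<lambda>i. mat_inv (E i))"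
  have Pall: "\<forall>i<M. P i \<in> carrier_mat (nn i) (nn i) \<and> E i * P i = 1\<^sub>m (nn i) \<and>
      P i * E i = 1\<^sub>m (nn i) \<and> transpose_mat (P i) = P i"
  proof (intro allI impI)
    fix i assume i: "i < M"
    note ip = inv_props[OF dimE[rule_format, OF i] Esym[rule_format, OF i] c1[rule_format, OF i] eps[rule_format, OF i]]
    show "P i \<in> carrier_mat (nn i) (nn i) \<and> E i * P i = 1\<^sub>m (nn i) \<and>
      P i * E i = 1\<^sub>m (nn i) \<and> transpose_mat (P i) = P i"
      unfolding P_def using ip by blast
  qed
  have Pc: "\<forall>i<M. P i \<in> carrier_mat (nn i) (nn i)" and EP: "\<forall>i<M. E i * P i = 1\<^sub>m (nn i)"
    and PE: "\<forall>i<M. P i * E i = 1\<^sub>m (nn i)" and Ps: "\<forall>i<M. transpose_mat (P i) = P i"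
    using Pall by auto
  define Kc where "Kc = (\<Sum>i<M. 1 / eps i)"
  have Kc: "Kc > 0"
  proof -
    have "0 < 1 / eps 0" using eps M by auto
    also have "\<dots> \<le> Kc" unfolding Kc_def using eps M
      by (intro member_le_sum) (auto intro: less_imp_le)
    finally show ?thesis .
  qed
  define N2 where "N2 = (\<lambda>y :: nat \<Rightarrow> real vec. \<Sum>i<M. \<Sum>j<nn i. (y i $ j)^2)"
  define V where "V = (\<lambda>y :: nat \<Rightarrow> real vec. \<Sum>i<M. y i \<bullet> (P i *\<^sub>v y i))"
  have N2nn: "0 \<le> N2 y" for y unfolding N2_def by (intro sum_nonneg) auto
  have gn: "gnorm M y = sqrt (N2 y)" if "\<forall>i<M. y i \<in> carrier_vec (nn i)" for y
    unfolding gnorm_def N2_def using that by (intro arg_cong[where f=sqrt] sum.cong refl) auto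
  have V0: "0 \<le> V y" and VK: "V y \<le> Kc * N2 y" if y: "\<forall>i<M. y i \<in> carrier_vec (nn i)" for y
  proof -
    have qb: "0 \<le> y i \<bullet> (P i *\<^sub>v y i) \<and> y i \<bullet> (P i *\<^sub>v y i) \<le> (1 / eps i) * (\<Sum>j<nn i. (y i $ j)^2)"
      if i: "i < M" for i
      using quad_bounds[OF dimE[rule_format, OF i] Pc[rule_format, OF i] EP[rule_format, OF i]
         c1[rule_format, OF i] eps[rule_format, OF i] y[rule_format, OF i]] by blast
    show "0 \<le> V y" unfolding V_def
      using qb by (intro sum_nonneg) blast
    have "V y \<le> (\<Sum>i<M. (1 / eps i) * (\<Sum>j<nn i. (y i $ j)^2))" unfolding V_def
      using qb by (intro sum_mono) blast
    also have "\<dots> \<le> (\<Sum>i<M. Kc * (\<Sum>j<nn i. (y i $ j)^2))"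
    proof (intro sum_mono mult_right_mono)
      fix i assume i: "i \<in> {..<M}"
      show "1 / eps i \<le> Kc" unfolding Kc_def using eps i
        by (intro member_le_sum) (auto intro: less_imp_le)
    qed (auto intro: sum_nonneg)
    also have "\<dots> = Kc * N2 y" unfolding N2_def by (simp add: sum_distrib_left)
    finally show "V y \<le> Kc * N2 y" .
  qed
  have step: "V (x (Suc t)) \<le> V (x t) - eps0 * N2 (x t)"
    if tr: "cl_traj M nn A B F C (\<lambda>i. G i * mat_inv (E i)) N l x" for x t
  proof -
    have xc: "\<forall>i<M. x t i \<in> carrier_vec (nn i)" using tr unfolding cl_traj_def by auto
    define vv where "vv = (\<lambda>i. vec m0 (\<lambda>k. \<Sum>j\<in>N i. l i j * ((C j *\<^sub>v x t j) $ k - (C i *\<^sub>v x t i) $ k)))"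
    have vvc: "vv i \<in> carrier_vec m0" for i unfolding vv_def by simp
    have xs: "x (Suc t) i = (A i + B i * (G i * P i)) *\<^sub>v x t i + F i *\<^sub>v vv i" if i: "i < M" for i
      using tr i dimC unfolding cl_traj_def vv_def P_def by auto
    have loc: "x (Suc t) i \<bullet> (P i *\<^sub>v x (Suc t) i) \<le> x t i \<bullet> (P i *\<^sub>v x t i)
        + ((C i *\<^sub>v x t i) \<bullet> vv i + vv i \<bullet> (S i *\<^sub>v vv i) - (\<Sum>j<nn i. (x t i $ j)^2 / H i $$ (j, j)))"
      if i: "i < M" for i
    proof -
      have c2Hi: "diagonal_mat (H i)" "\<forall>j<nn i. H i $$ (j, j) > 0" using c2H i by auto
      have c2Si: "diagonal_mat (S i)" using c2S i by auto
      note ls = local_step[OF dimA[rule_format, OF i] dimB[rule_format, OF i] dimF[rule_format, OF i]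
        dimC[rule_format, OF i] dimG[rule_format, OF i] dimS[rule_format, OF i] dimH[rule_format, OF i]
        dimE[rule_format, OF i] Pc[rule_format, OF i] EP[rule_format, OF i] PE[rule_format, OF i]
        Ps[rule_format, OF i] Esym[rule_format, OF i] c2Hi c2Si c3[rule_format, OF i]
        xc[rule_format, OF i] vvc[of i]]
      show ?thesis unfolding xs[OF i] using ls by linarith
    qed
    have "V (x (Suc t)) \<le> (\<Sum>i<M. x t i \<bullet> (P i *\<^sub>v x t i)
        + ((C i *\<^sub>v x t i) \<bullet> vv i + vv i \<bullet> (S i *\<^sub>v vv i) - (\<Sum>j<nn i. (x t i $ j)^2 / H i $$ (j, j))))"
      unfolding V_def using loc by (intro sum_mono) auto
    also have "\<dots> = V (x t) + (\<Sum>i<M. (C i *\<^sub>v x t i) \<bullet> vv i + vv i \<bullet> (S i *\<^sub>v vv i) - (\<Sum>j<nn i. (x t i $ j)^2 / H i $$ (j, j)))"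
      unfolding V_def by (simp add: sum.distrib)
    also have "(\<Sum>i<M. (C i *\<^sub>v x t i) \<bullet> vv i + vv i \<bullet> (S i *\<^sub>v vv i) - (\<Sum>j<nn i. (x t i $ j)^2 / H i $$ (j, j)))
        \<le> - eps0 * N2 (x t)"
      unfolding N2_def
      by (rule global_ineq[OF dimC Nsub Lpsd eps0 dimS c2S _ c4 c5 xc]) (use c2H vv_def in auto)
    finally show ?thesis by simp
  qed
  have traj_c: "\<forall>i<M. x t i \<in> carrier_vec (nn i)" if "cl_traj M nn A B F C (\<lambda>i. G i * mat_inv (E i)) N l x" for x t
    using that unfolding cl_traj_def by auto
  have mono: "V (x t) \<le> V (x 0)" if tr: "cl_traj M nn A B F C (\<lambda>i. G i * mat_inv (E i)) N l x" for x t
  proof (induction t)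
    case (Suc t)
    have "eps0 * N2 (x t) \<ge> 0" using eps0 N2nn by simp
    then show ?case using step[OF tr, of t] Suc by linarith
  qed simp
  have lowb: "eps0 * N2 (x t) \<le> V (x t)" if tr: "cl_traj M nn A B F C (\<lambda>i. G i * mat_inv (E i)) N l x" for x t
    using step[OF tr, of t] V0[OF traj_c[OF tr, of "Suc t"]] by linarith
  have tele: "eps0 * (\<Sum>s<T. N2 (x s)) \<le> V (x 0) - V (x T)" if tr: "cl_traj M nn A B F C (\<lambda>i. G i * mat_inv (E i)) N l x" for x T
  proof (induction T)
    case (Suc T)
    then show ?case using step[OF tr, of T] by (simp add: distrib_left)
  qed simp
  show ?thesis unfolding cl_asymp_stable_def
  proof (intro conjI allI impI)
    fix e :: real assume e: "e > 0"
    define d where "d = sqrt (e^2 * eps0 / Kc)"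
    have d: "d > 0" unfolding d_def using e eps0 Kc by simp
    show "\<exists>d>0. \<forall>x. cl_traj M nn A B F C (\<lambda>i. G i * mat_inv (E i)) N l x \<longrightarrow> gnorm M (x 0) < d \<longrightarrow> (\<forall>t. gnorm M (x t) < e)"
    proof (intro exI[of _ d] conjI allI impI d)
      fix x t assume tr: "cl_traj M nn A B F C (\<lambda>i. G i * mat_inv (E i)) N l x" and g0: "gnorm M (x 0) < d"
      have "N2 (x 0) < e^2 * eps0 / Kc" using g0 unfolding d_def gn[OF traj_c[OF tr]] by simp
      then have "Kc * N2 (x 0) < e^2 * eps0" using Kc by (simp add: field_simps)
      moreover have "eps0 * N2 (x t) \<le> Kc * N2 (x 0)"
        using lowb[OF tr, of t] mono[OF tr, of t] VK[OF traj_c[OF tr, of 0]] by linarith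
      ultimately have "eps0 * N2 (x t) < eps0 * e^2" by (simp add: mult.commute)
      then have "N2 (x t) < e^2" using eps0 by simp
      then have "sqrt (N2 (x t)) < sqrt (e^2)" by (simp only: real_sqrt_less_iff)
      also have "sqrt (e^2) = e" using e by simp
      finally have "sqrt (N2 (x t)) < e" .
      then show "gnorm M (x t) < e" unfolding gn[OF traj_c[OF tr]] .
    qed
  next
    show "\<exists>d>0. \<forall>x. cl_traj M nn A B F C (\<lambda>i. G i * mat_inv (E i)) N l x \<longrightarrow> gnorm M (x 0) < d \<longrightarrow> (\<lambda>t. gnorm M (x t)) \<longlonglongrightarrow> 0"
    proof (intro exI[of _ 1] conjI allI impI)
      fix x assume tr: "cl_traj M nn A B F C (\<lambda>i. G i * mat_inv (E i)) N l x"
      have "summable (\<lambda>t. N2 (x t))"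
      proof (rule bounded_imp_summable)
        show "0 \<le> N2 (x n)" for n by (rule N2nn)
        show "(\<Sum>k\<le>n. N2 (x k)) \<le> V (x 0) / eps0" for n
        proof -
          have "eps0 * (\<Sum>k<Suc n. N2 (x k)) \<le> V (x 0)"
            using tele[OF tr, of "Suc n"] V0[OF traj_c[OF tr, of "Suc n"]] by linarith
          then show ?thesis using eps0 by (simp add: lessThan_Suc_atMost field_simps)
        qed
      qed
      then have "(\<lambda>t. N2 (x t)) \<longlonglongrightarrow> 0" by (rule summable_LIMSEQ_zero)
      then have "(\<lambda>t. sqrt (N2 (x t))) \<longlonglongrightarrow> sqrt 0" by (rule tendsto_real_sqrt)
      then show "(\<lambda>t. gnorm M (x t)) \<longlonglongrightarrow> 0" using gn[OF traj_c[OF tr]] by simp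
    qed simp
  qed
qed

end
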